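(* Let $q>0$ and $\ell,\alpha\in\{0,1,2,\ldots\}$, and put $g_\ell(t)=\frac{\log^\ell(t+q)}{t+q}$ for $t\ge0$. Then $$\tilde\gamma_\ell(q)=\sum_{n=0}^{\alpha}(-1)^n\frac{\log^\ell(n+q)}{n+q}-(-1)^{\alpha}\frac{\log^\ell(\alpha+q)}{2(\alpha+q)}+\frac12\int_{\alpha}^\infty\overline E_0(-t)\,g_\ell'(t)\,dt,$$ where $g_\ell'$ is the derivative with respect to $t$. In particular, if $q\in\{1,2,3,\ldots\}$ and $\ell\in\{0,1,2,\ldots\}$, then $$\tilde\gamma_\ell(q)=\frac{\log^\ell q}{2q}+\frac{(-1)^q}{2}\sum_{j=q}^\infty(-1)^{j+1}\left(\frac{\log^\ell(j+1)}{j+1}-\frac{\log^\ell j}{j}\right).$$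
   Context: For $q>0$, $\zeta_E(z,q)=\sum_{n=0}^\infty (-1)^n (n+q)^{-z}$ for $\mathrm{Re}(z)>0$, extended by analytic continuation to an entire function of $z$. The modified Stieltjes constants $\tilde\gamma_k(q)$ are defined by the Taylor expansion $\zeta_E(z,q)=\sum_{k=0}^\infty\frac{(-1)^k\tilde\gamma_k(q)}{k!}(z-1)^k$. $\overline E_0$ is the quasi-periodic Euler function: $\overline E_0(t)=1$ for $0\le t<1$ and $\overline E_0(t+1)=-\overline E_0(t)$ for all real $t$. Convention: $\log^0 x=1$. *)

theory Defs
  imports "HOL-Complex_Analysis.Complex_Analysis"
begin

text \<open>Alternating Hurwitz zeta function: the entire function that agrees with
  sum_{n>=0} (-1)^n (n+q)^(-z) on Re z > 0 (unique by the identity theorem).\<close>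
definition zeta_E :: "real \<Rightarrow> complex \<Rightarrow> complex" where
  "zeta_E q = (THE f. f holomorphic_on UNIV \<and>
      (\<forall>z. Re z > 0 \<longrightarrow>
         (\<lambda>n. (-1) ^ n * (complex_of_real (real n + q)) powr (- z)) sums f z))"

text \<open>Modified Stieltjes constants: zeta_E(z,q) = sum_k (-1)^k gt_k(q)/k! (z-1)^k,
  i.e. gt_k(q) = (-1)^k times the k-th derivative of zeta_E(., q) at 1.\<close>
definition mod_stieltjes :: "nat \<Rightarrow> real \<Rightarrow> complex" where
  "mod_stieltjes k q = (-1) ^ k * (deriv ^^ k) (zeta_E q) 1"

definition E0bar :: "real \<Rightarrow> real" where
  "E0bar t = (if even \<lfloor>t\<rfloor> then 1 else -1)"

end

theory Submission
  imports Defs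
begin

fun Dq :: "real \<Rightarrow> nat \<Rightarrow> complex \<Rightarrow> real \<Rightarrow> complex" where
  "Dq q 0 z x = complex_of_real (x + q) powr (- z)"
| "Dq q (Suc K) z x = Dq q K z x - Dq q K z (x + 1)"

lemma Dq0_deriv:
  assumes "x + q > 0"
  shows "((\<lambda>x. Dq q 0 z x) has_vector_derivative (- z * Dq q 0 (z + 1) x)) (at x)"
proof -
  have nn: "complex_of_real x + complex_of_real q \<notin> \<real>\<^sub>\<le>\<^sub>0"
    using assms by (metis nonpos_Reals_of_real_iff not_le of_real_add)
  have "((\<lambda>w. (w + complex_of_real q) powr (- z)) has_field_derivative
          (- z * (complex_of_real x + complex_of_real q) powr (- z - 1))) (at (complex_of_real x))"
  proof -
    have d1: "((\<lambda>w. w powr (-z)) has_field_derivative (- z * (complex_of_real x + complex_of_real q) powr (- z - 1))) (at (complex_of_real x + complex_of_real q))"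
      using has_field_derivative_powr[OF nn, of "-z"] by simp
    have d2: "((\<lambda>w. w + complex_of_real q) has_field_derivative 1) (at (complex_of_real x))"
      by (auto intro!: derivative_eq_intros)
    show ?thesis using DERIV_chain2[where f="\<lambda>w. w powr (-z)" and g="\<lambda>w. w + complex_of_real q", OF d1 d2] by simp
  qed
  from has_vector_derivative_real_field[OF this]
  have "((\<lambda>x. (complex_of_real x + complex_of_real q) powr (- z)) has_vector_derivative
          (- z * (complex_of_real x + complex_of_real q) powr (- z - 1))) (at x within UNIV)" .
  moreover have "(\<lambda>x. Dq q 0 z x) = (\<lambda>x. (complex_of_real x + complex_of_real q) powr (- z))" by simp
  moreover have "Dq q 0 (z + 1) x = (complex_of_real x + complex_of_real q) powr (- z - 1)"
  proof -
    have e: "- (z + 1) = - z - 1" by simp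
    show ?thesis by (simp only: Dq.simps e of_real_add)
  qed
  ultimately show ?thesis by simp
qed

lemma Dq_deriv:
  "x + q > 0 \<Longrightarrow> ((\<lambda>x. Dq q K z x) has_vector_derivative (- z * Dq q K (z + 1) x)) (at x)"
proof (induction K arbitrary: z x)
  case 0
  then show ?case using Dq0_deriv by blast
next
  case (Suc K)
  have a: "((\<lambda>x. Dq q K z x) has_vector_derivative (- z * Dq q K (z + 1) x)) (at x)"
    using Suc by blast
  have "((\<lambda>x. Dq q K z x) \<circ> (\<lambda>x. x + 1) has_vector_derivative
          (1 *\<^sub>R (- z * Dq q K (z + 1) (x + 1)))) (at x)"
    apply (rule vector_diff_chain_at)
     apply (rule has_vector_derivative_add[OF has_vector_derivative_id has_vector_derivative_const, simplified])
    using Suc by simp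
  then have b: "((\<lambda>x. Dq q K z (x + 1)) has_vector_derivative (- z * Dq q K (z + 1) (x + 1))) (at x)"
    by (simp add: o_def)
  show ?case using has_vector_derivative_diff[OF a b] by (simp add: algebra_simps)
qed

lemma onorm_scaleR_vec: "onorm (\<lambda>h::real. h *\<^sub>R (v::complex)) = norm v"
  using onorm_scaleR_left[of "\<lambda>x::real. x" v] onorm_id[where 'a=real] by simp

lemma Dq_bound:
  assumes q: "q > 0"
  shows "Re z + K \<ge> 0 \<Longrightarrow> x \<ge> 0 \<Longrightarrow>
    norm (Dq q K z x) \<le> (\<Prod>j<K. norm (z + of_nat j)) * (x + q) powr (-(Re z + K))"
proof (induction K arbitrary: z x)
  case 0
  have "norm (complex_of_real (x + q) powr (- z)) = (x + q) powr (- Re z)"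
    using 0 q by (subst norm_powr_real_powr) auto
  then show ?case by simp
next
  case (Suc K)
  define B where "B = norm z * (\<Prod>j<K. norm (z + 1 + of_nat j)) * (x + q) powr (-(Re z + 1 + K))"
  have der: "((\<lambda>x. Dq q K z x) has_derivative (\<lambda>h. h *\<^sub>R (- z * Dq q K (z + 1) y))) (at y within {x..x+1})"
    if "y \<in> {x..x+1}" for y
  proof -
    have "y + q > 0" using that Suc.prems q by auto
    from Dq_deriv[OF this, of K z] show ?thesis
      unfolding has_vector_derivative_def by (rule has_derivative_at_withinI)
  qed
  have bnd: "onorm (\<lambda>h. h *\<^sub>R (- z * Dq q K (z + 1) y)) \<le> B" if "y \<in> {x..x+1}" for y
  proof -
    have y0: "y \<ge> 0" using that Suc.prems by auto
    have "norm (Dq q K (z + 1) y) \<le> (\<Prod>j<K. norm (z + 1 + of_nat j)) * (y + q) powr (-(Re (z + 1) + K))"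
      using Suc.IH[of "z + 1" y] Suc.prems y0 by (simp add: add_ac)
    also have "\<dots> \<le> (\<Prod>j<K. norm (z + 1 + of_nat j)) * (x + q) powr (-(Re z + 1 + K))"
    proof (rule mult_left_mono)
      show "(y + q) powr (-(Re (z + 1) + K)) \<le> (x + q) powr (-(Re z + 1 + K))"
        using powr_mono2'[of "-(Re z + 1 + K)" "x + q" "y + q"] Suc.prems that q by simp
    qed (auto intro: prod_nonneg)
    finally have "norm z * norm (Dq q K (z + 1) y) \<le> B"
      unfolding B_def by (simp add: mult.assoc mult_left_mono)
    moreover have "onorm (\<lambda>h. h *\<^sub>R (- z * Dq q K (z + 1) y)) = norm z * norm (Dq q K (z + 1) y)"
      by (subst onorm_scaleR_vec) (simp add: norm_mult)
    ultimately show ?thesis by simp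
  qed
  have "norm (Dq q K z x - Dq q K z (x + 1)) \<le> B * norm (x - (x + 1))"
    by (rule differentiable_bound[OF convex_real_interval(5) der bnd]) auto
  also have "B * norm (x - (x + 1)) = B" by simp
  also have "B = (\<Prod>j<Suc K. norm (z + of_nat j)) * (x + q) powr (-(Re z + Suc K))"
    unfolding B_def prod.lessThan_Suc_shift by (simp add: add_ac)
  finally show ?case by simp
qed

lemma series_local_bound_shrink:
  fixes a :: "nat \<Rightarrow> complex \<Rightarrow> complex" and U :: "complex set"
  assumes U: "open U" and hol: "\<And>n. a n holomorphic_on U"
    and bnd: "\<And>x. x \<in> U \<Longrightarrow> \<exists>d h. 0 < d \<and> cball x d \<subseteq> U \<and> summable h \<and>
                 (\<forall>\<^sub>F n in sequentially. \<forall>y\<in>cball x d. norm (a n y) \<le> h n)"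
    and x: "x \<in> U"
  shows "\<exists>d h. 0 < d \<and> summable h \<and> (\<forall>\<^sub>F n in sequentially. \<forall>y\<in>ball x d \<inter> U. norm ((deriv ^^ k) (a n) y) \<le> h n)"
proof -
  obtain d h where d: "0 < d" "cball x d \<subseteq> U" "summable h"
    and ev: "\<forall>\<^sub>F n in sequentially. \<forall>y\<in>cball x d. norm (a n y) \<le> h n"
    using bnd[OF x] by blast
  define r where "r = d / 2"
  have r: "r > 0" using d by (simp add: r_def)
  define h' where "h' n = fact k * h n / r ^ k" for n
  have "summable h'" unfolding h'_def
    by (intro summable_divide summable_mult d)
  moreover have "\<forall>\<^sub>F n in sequentially. \<forall>y\<in>ball x r \<inter> U. norm ((deriv ^^ k) (a n) y) \<le> h' n"
    using ev
  proof eventually_elim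
    case (elim n)
    show ?case
    proof
      fix y assume y: "y \<in> ball x r \<inter> U"
      have sub: "cball y r \<subseteq> cball x d"
      proof
        fix w assume w: "w \<in> cball y r"
        have "dist x w \<le> dist x y + dist y w" by (rule dist_triangle)
        then show "w \<in> cball x d" using y w by (auto simp: r_def)
      qed
      show "norm ((deriv ^^ k) (a n) y) \<le> h' n"
      proof (cases "k = 0")
        case True
        have "y \<in> cball x d" using y r by (auto simp: r_def)
        then show ?thesis using elim True unfolding h'_def by auto
      next
        case False
        show ?thesis
        proof (rule field_le_epsilon)
          fix e :: real assume e: "e > 0"
          define e' where "e' = e * r ^ k / fact k"
          have e': "e' > 0" using e r by (simp add: e'_def)
          have "norm ((deriv ^^ k) (a n) y) \<le> fact k * (h n + e') / r ^ k"
          proof (rule Cauchy_higher_deriv_bound[where y=0])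
            show "a n holomorphic_on ball y r"
              using hol sub d(2) ball_subset_cball by (meson holomorphic_on_subset order_trans)
            show "continuous_on (cball y r) (a n)"
              using hol sub d(2) by (meson holomorphic_on_imp_continuous_on holomorphic_on_subset order_trans)
            show "a n w \<in> ball 0 (h n + e')" if "w \<in> ball y r" for w
            proof -
              have "w \<in> cball y r" using that by auto
              then have "w \<in> cball x d" using sub by blast
              then have "norm (a n w) \<le> h n" using elim by auto
              then show ?thesis using e' by simp
            qed
          qed (use r False in auto)
          also have "fact k * (h n + e') / r ^ k = h' n + e"
            using r by (simp add: h'_def e'_def field_simps)
          finally show "norm ((deriv ^^ k) (a n) y) \<le> h' n + e" .
        qed
      qed
    qed
  qed
  ultimately show ?thesis using r by blast
qed

lemma series_higher_deriv:
  fixes a :: "nat \<Rightarrow> complex \<Rightarrow> complex" and U :: "complex set"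
  assumes U: "open U" and hol: "\<And>n. a n holomorphic_on U"
    and bnd: "\<And>x. x \<in> U \<Longrightarrow> \<exists>d h. 0 < d \<and> cball x d \<subseteq> U \<and> summable h \<and>
                 (\<forall>\<^sub>F n in sequentially. \<forall>y\<in>cball x d. norm (a n y) \<le> h n)"
  shows "x \<in> U \<Longrightarrow> (\<lambda>n. (deriv ^^ k) (a n) x) sums (deriv ^^ k) (\<lambda>z. \<Sum>n. a n z) x"
proof (induction k arbitrary: x)
  case 0
  obtain d h where d: "0 < d" "cball x d \<subseteq> U" "summable h"
    and ev: "\<forall>\<^sub>F n in sequentially. \<forall>y\<in>cball x d. norm (a n y) \<le> h n"
    using bnd[OF 0] by blast
  have "\<forall>\<^sub>F n in sequentially. norm (a n x) \<le> h n"
    using ev by eventually_elim (use d in auto)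
  then have "summable (\<lambda>n. a n x)"
    by (rule summable_comparison_test_ev[OF _ d(3)])
  then show ?case by (simp add: summable_sums)
next
  case (Suc k)
  obtain g g' where gg: "\<forall>x\<in>U. ((\<lambda>n. (deriv ^^ k) (a n) x) sums g x) \<and>
       ((\<lambda>n. (deriv ^^ Suc k) (a n) x) sums g' x) \<and> (g has_field_derivative g' x) (at x)"
  proof -
    have "\<exists>g g'. \<forall>x\<in>U. ((\<lambda>n. (deriv ^^ k) (a n) x) sums g x) \<and>
       ((\<lambda>n. (deriv ^^ Suc k) (a n) x) sums g' x) \<and> (g has_field_derivative g' x) (at x)"
      by (rule series_and_derivative_comparison_local[OF U has_field_derivative_higher_deriv[OF hol U]
            series_local_bound_shrink[OF U hol bnd]])
    then show ?thesis using that by blast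
  qed
  have eq: "(deriv ^^ k) (\<lambda>z. \<Sum>n. a n z) y = g y" if "y \<in> U" for y
    using Suc.IH[OF that] gg that sums_unique2 by blast
  have "(deriv ^^ Suc k) (\<lambda>z. \<Sum>n. a n z) x = deriv g x"
    using eq eventually_nhds_in_open[OF U Suc.prems]
    by (simp, intro deriv_cong_ev) (auto elim!: eventually_mono)
  also have "\<dots> = g' x" using gg Suc.prems DERIV_imp_deriv by blast
  finally show ?case using gg Suc.prems by simp
qed

lemma series_holomorphic:
  fixes a :: "nat \<Rightarrow> complex \<Rightarrow> complex" and U :: "complex set"
  assumes U: "open U" and hol: "\<And>n. a n holomorphic_on U"
    and bnd: "\<And>x. x \<in> U \<Longrightarrow> \<exists>d h. 0 < d \<and> cball x d \<subseteq> U \<and> summable h \<and>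
                 (\<forall>\<^sub>F n in sequentially. \<forall>y\<in>cball x d. norm (a n y) \<le> h n)"
  shows "(\<lambda>z. \<Sum>n. a n z) holomorphic_on U"
proof -
  obtain g g' where gg: "\<forall>x\<in>U. ((\<lambda>n. (deriv ^^ 0) (a n) x) sums g x) \<and>
       ((\<lambda>n. (deriv ^^ Suc 0) (a n) x) sums g' x) \<and> (g has_field_derivative g' x) (at x)"
  proof -
    have "\<exists>g g'. \<forall>x\<in>U. ((\<lambda>n. (deriv ^^ 0) (a n) x) sums g x) \<and>
       ((\<lambda>n. (deriv ^^ Suc 0) (a n) x) sums g' x) \<and> (g has_field_derivative g' x) (at x)"
      by (rule series_and_derivative_comparison_local[OF U has_field_derivative_higher_deriv[OF hol U]
            series_local_bound_shrink[OF U hol bnd]])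
    then show ?thesis using that by blast
  qed
  have eq: "g y = (\<Sum>n. a n y)" if "y \<in> U" for y
    using gg that sums_unique by fastforce
  show ?thesis unfolding holomorphic_on_open[OF U]
  proof
    fix x assume x: "x \<in> U"
    show "\<exists>f'. ((\<lambda>z. \<Sum>n. a n z) has_field_derivative f') (at x)"
      using has_field_derivative_transform_within_open[of g "g' x" x U "\<lambda>z. \<Sum>n. a n z"] gg x U eq
      by blast
  qed
qed

lemma Dq_holo: "(\<lambda>z. Dq q K z x) holomorphic_on UNIV"
  by (induction K arbitrary: x) (auto intro!: holomorphic_intros)

definition UK :: "nat \<Rightarrow> complex set" where "UK K = {z. Re z > 1 - real K}"

lemma open_UK: "open (UK K)"
  unfolding UK_def by (rule open_halfspace_Re_gt)

lemma Dq_local_bound: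
  assumes q: "q > 0" and x: "x \<in> UK K"
  shows "\<exists>d h. 0 < d \<and> cball x d \<subseteq> UK K \<and> summable h \<and>
     (\<forall>\<^sub>F n in sequentially. \<forall>y\<in>cball x d. norm ((-1) ^ n * Dq q K y (real n)) \<le> h n)"
proof -
  define d where "d = (Re x - (1 - real K)) / 2"
  have d: "d > 0" using x by (simp add: UK_def d_def)
  define P where "P = (\<Prod>j<K. norm x + d + real j)"
  define h where "h n = P * real n powr (-(1 + d))" for n
  have sub: "cball x d \<subseteq> UK K"
  proof
    fix y assume "y \<in> cball x d"
    then have "norm (x - y) \<le> d" by (simp add: dist_norm)
    moreover have "\<bar>Re x - Re y\<bar> \<le> norm (x - y)" using abs_Re_le_cmod[of "x - y"] by simp
    ultimately show "y \<in> UK K" using d by (auto simp: UK_def d_def)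
  qed
  have "summable (\<lambda>n. real n powr (-(1 + d)))"
    using d by (subst summable_real_powr_iff) auto
  then have sh: "summable h" unfolding h_def by (rule summable_mult)
  have "\<forall>\<^sub>F n in sequentially. \<forall>y\<in>cball x d. norm ((-1) ^ n * Dq q K y (real n)) \<le> h n"
    using eventually_ge_at_top[of "1::nat"]
  proof eventually_elim
    case (elim n)
    show ?case
    proof
      fix y assume y: "y \<in> cball x d"
      have nxy: "norm (x - y) \<le> d" using y by (simp add: dist_norm)
      have ReY: "Re y \<ge> Re x - d"
        using abs_Re_le_cmod[of "x - y"] nxy by simp
      have n1: "real n \<ge> 1" using elim by simp
      have ReyK: "Re y + real K \<ge> 1 + d"
      proof -
        have "2 * d = Re x - (1 - real K)" by (simp add: d_def)
        then show ?thesis using ReY by linarith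
      qed
      have "norm ((-1) ^ n * Dq q K y (real n)) = norm (Dq q K y (real n))"
        by (simp add: norm_mult norm_power)
      also have "\<dots> \<le> (\<Prod>j<K. norm (y + of_nat j)) * (real n + q) powr (-(Re y + K))"
        using ReyK d by (intro Dq_bound[OF q]) auto
      also have "\<dots> \<le> P * real n powr (-(1 + d))"
      proof (rule mult_mono)
        show "(\<Prod>j<K. norm (y + of_nat j)) \<le> P"
          unfolding P_def
        proof (rule prod_mono)
          fix j assume "j \<in> {..<K}"
          have "norm (y + of_nat j) \<le> norm y + real j" using norm_triangle_ineq[of y "of_nat j"] by simp
          also have "norm y \<le> norm x + norm (x - y)" using norm_triangle_ineq4[of x "x - y"]
            by (metis diff_diff_cancel norm_minus_commute norm_triangle_sub add.commute)
          finally show "0 \<le> norm (y + of_nat j) \<and> norm (y + of_nat j) \<le> norm x + d + real j"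
            using nxy by simp
        qed
        have "(real n + q) powr (-(Re y + K)) \<le> real n powr (-(Re y + K))"
          using powr_mono2'[of "-(Re y + K)" "real n" "real n + q"] n1 q ReyK d
          by auto
        also have "\<dots> \<le> real n powr (-(1 + d))"
          using ReyK n1 by (intro powr_mono) auto
        finally show "(real n + q) powr (-(Re y + K)) \<le> real n powr (-(1 + d))" .
      qed (use d in \<open>auto simp: P_def intro!: prod_nonneg add_nonneg_nonneg\<close>)
      finally show "norm ((-1) ^ n * Dq q K y (real n)) \<le> h n" by (simp add: h_def)
    qed
  qed
  then show ?thesis using d sub sh by blast
qed

definition Ftail :: "real \<Rightarrow> nat \<Rightarrow> complex \<Rightarrow> complex" where
  "Ftail q K z = (\<Sum>n. (-1) ^ n * Dq q K z (real n))"

lemma Dq_term_holo: "(\<lambda>z. (-1) ^ n * Dq q K z (real n)) holomorphic_on S"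
  by (intro holomorphic_intros holomorphic_on_subset[OF Dq_holo]) auto

lemma Ftail_holo: "q > 0 \<Longrightarrow> Ftail q K holomorphic_on UK K"
  unfolding Ftail_def[abs_def]
  by (rule series_holomorphic[OF open_UK Dq_term_holo Dq_local_bound])

lemma Ftail_higher_deriv: "q > 0 \<Longrightarrow> x \<in> UK K \<Longrightarrow>
   (\<lambda>n. (deriv ^^ k) (\<lambda>z. (-1) ^ n * Dq q K z (real n)) x) sums (deriv ^^ k) (Ftail q K) x"
  unfolding Ftail_def[abs_def]
  by (rule series_higher_deriv[OF open_UK Dq_term_holo Dq_local_bound])

lemma Ftail_sums: "q > 0 \<Longrightarrow> x \<in> UK K \<Longrightarrow> (\<lambda>n. (-1) ^ n * Dq q K x (real n)) sums Ftail q K x"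
  using Ftail_higher_deriv[of q x K 0] by simp

definition FK :: "real \<Rightarrow> nat \<Rightarrow> complex \<Rightarrow> complex" where
  "FK q K z = (\<Sum>j<K. Dq q j z 0 / 2 ^ Suc j) + Ftail q K z / 2 ^ K"

lemma FK_Suc:
  assumes q: "q > 0" and x: "x \<in> UK K"
  shows "FK q (Suc K) x = FK q K x"
proof -
  define D where "D n = Dq q K x (real n)" for n
  define S where "S = Ftail q K x"
  have s1: "(\<lambda>n. (-1) ^ n * D n) sums S" unfolding D_def S_def by (rule Ftail_sums[OF q x])
  have s2: "(\<lambda>n. (-1) ^ Suc n * D (Suc n)) sums (S - D 0)"
    using s1 by (subst sums_Suc_iff) simp
  have "(\<lambda>n. (-1) ^ n * D n + (-1) ^ Suc n * D (Suc n)) sums (S + (S - D 0))"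
    by (rule sums_add[OF s1 s2])
  moreover have "(\<lambda>n. (-1) ^ n * D n + (-1) ^ Suc n * D (Suc n)) = (\<lambda>n. (-1) ^ n * Dq q (Suc K) x (real n))"
    by (auto simp: D_def algebra_simps)
  ultimately have FS: "Ftail q (Suc K) x = 2 * S - D 0"
    unfolding Ftail_def by (auto dest!: sums_unique)
  have D0: "D 0 = Dq q K x 0" by (simp add: D_def)
  show ?thesis
    unfolding FK_def FS D0 S_def by (simp add: field_simps)
qed

lemma UK_mono: "K \<le> K' \<Longrightarrow> UK K \<subseteq> UK K'"
  by (auto simp: UK_def)

lemma FK_stable: "q > 0 \<Longrightarrow> z \<in> UK K \<Longrightarrow> FK q (K + m) z = FK q K z"
proof (induction m)
  case (Suc m)
  have "z \<in> UK (K + m)" using Suc.prems UK_mono[of K "K + m"] by auto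
  then show ?case using FK_Suc[of q z "K + m"] Suc by simp
qed simp

definition Zq :: "real \<Rightarrow> complex \<Rightarrow> complex" where
  "Zq q z = FK q (nat \<lceil>- Re z\<rceil> + 2) z"

lemma in_UK_K0: "z \<in> UK (nat \<lceil>- Re z\<rceil> + 2)"
  unfolding UK_def by simp linarith

lemma Zq_eq: assumes q: "q > 0" and z: "z \<in> UK K" shows "Zq q z = FK q K z"
proof -
  define K0 where "K0 = nat \<lceil>- Re z\<rceil> + 2"
  have z0: "z \<in> UK K0" unfolding K0_def by (rule in_UK_K0)
  show ?thesis
  proof (cases "K \<le> K0")
    case True
    then show ?thesis using FK_stable[OF q z, of "K0 - K"] unfolding Zq_def K0_def[symmetric] by simp
  next
    case False
    then show ?thesis using FK_stable[OF q z0, of "K - K0"] unfolding Zq_def K0_def[symmetric] by simp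
  qed
qed

lemma FK_holo: "q > 0 \<Longrightarrow> FK q K holomorphic_on UK K"
  unfolding FK_def[abs_def]
  by (intro holomorphic_intros Ftail_holo Dq_holo[THEN holomorphic_on_subset]) auto

lemma Zq_holo: assumes q: "q > 0" shows "Zq q holomorphic_on UNIV"
  unfolding holomorphic_on_open[OF open_UNIV]
proof
  fix x :: complex
  define K where "K = nat \<lceil>- Re x\<rceil> + 2"
  have x: "x \<in> UK K" unfolding K_def by (rule in_UK_K0)
  obtain f' where "(FK q K has_field_derivative f') (at x)"
    using FK_holo[OF q, of K] x open_UK unfolding holomorphic_on_open[OF open_UK] by blast
  then show "\<exists>f'. (Zq q has_field_derivative f') (at x)"
    using has_field_derivative_transform_within_open[of "FK q K" f' x "UK K" "Zq q"] x open_UK Zq_eq[OF q]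
    by auto
qed

lemma Zq_sums:
  assumes q: "q > 0" and z: "Re z > 0"
  shows "(\<lambda>n. (-1) ^ n * (complex_of_real (real n + q)) powr (- z)) sums Zq q z"
proof -
  define f where "f n = Dq q 0 z (real n)" for n
  have z1: "z \<in> UK 1" using z by (simp add: UK_def)
  have P: "(\<lambda>N. \<Sum>n<N. (-1) ^ n * Dq q 1 z (real n)) \<longlonglongrightarrow> Ftail q 1 z"
    using Ftail_sums[OF q z1] unfolding sums_def .
  have ps: "(\<Sum>n<N. (-1) ^ n * Dq q 1 z (real n)) = 2 * (\<Sum>n<N. (-1) ^ n * f n) - f 0 + (-1) ^ N * f N" for N
    by (induction N) (auto simp: f_def algebra_simps)
  have "(\<lambda>N. (-1) ^ N * f N) \<longlonglongrightarrow> 0"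
  proof -
    have "(\<lambda>N. (real N + q) powr (- Re z)) \<longlonglongrightarrow> 0"
      by (rule tendsto_neg_powr) (use z in \<open>auto intro!: filterlim_tendsto_add_at_top[OF tendsto_const] filterlim_real_sequentially
            simp: add.commute[of _ q]\<close>)
    moreover have "(\<lambda>N. norm ((-1) ^ N * f N)) = (\<lambda>N. (real N + q) powr (- Re z))"
      using q by (simp add: f_def norm_mult norm_power norm_powr_real_powr fun_eq_iff)
    ultimately have "(\<lambda>N. norm ((-1) ^ N * f N)) \<longlonglongrightarrow> 0" by (simp only:)
    then show ?thesis by (rule tendsto_norm_zero_cancel)
  qed
  then have "(\<lambda>N. ((\<Sum>n<N. (-1) ^ n * Dq q 1 z (real n)) + f 0 - (-1) ^ N * f N) / 2) \<longlonglongrightarrow> (Ftail q 1 z + f 0 - 0) / 2"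
    by (intro tendsto_divide tendsto_diff tendsto_add P tendsto_const) auto
  moreover have "((\<Sum>n<N. (-1) ^ n * Dq q 1 z (real n)) + f 0 - (-1) ^ N * f N) / 2 = (\<Sum>n<N. (-1) ^ n * f n)" for N
    unfolding ps by simp
  ultimately have "(\<lambda>n. (-1) ^ n * f n) sums ((Ftail q 1 z + f 0) / 2)"
    unfolding sums_def by simp
  moreover have "(Ftail q 1 z + f 0) / 2 = Zq q z"
    using Zq_eq[OF q z1] by (simp add: FK_def f_def field_simps)
  ultimately show ?thesis by (simp add: f_def)
qed

lemma zeta_E_eq: assumes q: "q > 0" shows "zeta_E q = Zq q"
  unfolding zeta_E_def
proof (rule the_equality)
  show "Zq q holomorphic_on UNIV \<and> (\<forall>z. 0 < Re z \<longrightarrow>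
      (\<lambda>n. (- 1) ^ n * complex_of_real (real n + q) powr - z) sums Zq q z)"
    using Zq_holo[OF q] Zq_sums[OF q] by auto
next
  fix f assume f: "f holomorphic_on UNIV \<and> (\<forall>z. 0 < Re z \<longrightarrow>
      (\<lambda>n. (- 1) ^ n * complex_of_real (real n + q) powr - z) sums f z)"
  have ev: "eventually (\<lambda>y. f y = Zq q y) (nhds 1)"
  proof -
    have "eventually (\<lambda>y. y \<in> UK 1) (nhds 1)"
      by (rule eventually_nhds_in_open[OF open_UK]) (simp add: UK_def)
    then show ?thesis
    proof eventually_elim
      case (elim y)
      then have "Re y > 0" by (simp add: UK_def)
      then show ?case using f Zq_sums[OF q] sums_unique2 by blast
    qed
  qed
  show "f = Zq q"
  proof
    fix w
    have fh: "f holomorphic_on UNIV" using f by blast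
    have dd: "(deriv ^^ n) f 1 = (deriv ^^ n) (Zq q) 1" for n
      by (rule higher_deriv_cong_ev[OF ev refl])
    show "f w = Zq q w"
      by (rule holomorphic_fun_eq_on_connected[OF fh Zq_holo[OF q] open_UNIV connected_UNIV dd]) auto
  qed
qed

lemma hd_exp2:
  "(deriv ^^ l) (\<lambda>z::complex. c1 * exp (a * z) + c2 * exp (b * z)) =
     (\<lambda>z. c1 * a ^ l * exp (a * z) + c2 * b ^ l * exp (b * z))"
proof (induction l)
  case (Suc l)
  have "deriv (\<lambda>z. c1 * a ^ l * exp (a * z) + c2 * b ^ l * exp (b * z)) w =
          c1 * a ^ Suc l * exp (a * w) + c2 * b ^ Suc l * exp (b * w)" for w
    by (rule DERIV_imp_deriv) (auto intro!: derivative_eq_intros simp: algebra_simps)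
  note * = this
  have "(deriv ^^ Suc l) (\<lambda>z::complex. c1 * exp (a * z) + c2 * exp (b * z)) =
        deriv (\<lambda>z. c1 * a ^ l * exp (a * z) + c2 * b ^ l * exp (b * z))"
    by (simp only: funpow.simps o_apply Suc.IH)
  then show ?case by (auto simp: fun_eq_iff *)
qed simp

lemma powr_exp_real: "x > 0 \<Longrightarrow> complex_of_real x powr (- z) = exp ((- complex_of_real (ln x)) * z)"
  by (simp add: powr_def Ln_of_real mult.commute)

lemma exp_at1: "x > 0 \<Longrightarrow> exp (- complex_of_real (ln x) * 1) = complex_of_real (1 / x)"
proof -
  assume x: "x > 0"
  have "exp (- complex_of_real (ln x) * 1) = complex_of_real (exp (- ln x))"
    by (simp flip: exp_of_real)
  also have "exp (- ln x) = 1 / x" using x by (simp add: exp_minus inverse_eq_divide)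
  finally show ?thesis .
qed

lemma exp_at1': "x > 0 \<Longrightarrow> exp (- complex_of_real (ln x)) = complex_of_real (1 / x)"
  using exp_at1[of x] by simp

lemma key:
  fixes q :: real and l :: nat
  assumes q: "q > 0"
  defines "h \<equiv> (\<lambda>n::nat. ln (real n + q) ^ l / (real n + q))"
  shows "summable (\<lambda>n. (-1) ^ n * (h n - h (Suc n))) \<and>
         mod_stieltjes l q = complex_of_real (h 0 / 2 + (\<Sum>n. (-1) ^ n * (h n - h (Suc n))) / 2)"
proof -
  define u where "u n = (-1) ^ n * (h n - h (Suc n))" for n
  have U1: "1 \<in> UK 1" by (simp add: UK_def)
  have "(deriv ^^ l) (zeta_E q) 1 = (deriv ^^ l) (FK q 1) 1"
  proof (rule higher_deriv_cong_ev[OF _ refl])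
    have "eventually (\<lambda>y. y \<in> UK 1) (nhds 1)"
      by (rule eventually_nhds_in_open[OF open_UK U1])
    then show "eventually (\<lambda>y. zeta_E q y = FK q 1 y) (nhds 1)"
      by eventually_elim (simp add: zeta_E_eq[OF q] Zq_eq[OF q])
  qed
  also have "FK q 1 = (\<lambda>z. (1/2) * Dq q 0 z 0 + (1/2) * Ftail q 1 z)"
    by (auto simp: FK_def fun_eq_iff)
  also have "(deriv ^^ l) (\<lambda>z. (1/2) * Dq q 0 z 0 + (1/2) * Ftail q 1 z) 1 =
      (1/2) * (deriv ^^ l) (\<lambda>z. Dq q 0 z 0) 1 + (1/2) * (deriv ^^ l) (Ftail q 1) 1"
  proof -
    have h1: "(\<lambda>z. Dq q 0 z 0) holomorphic_on UK 1" by (rule Dq_holo[THEN holomorphic_on_subset]) auto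
    have h2: "Ftail q 1 holomorphic_on UK 1" by (rule Ftail_holo[OF q])
    show ?thesis
      apply (subst higher_deriv_add[OF _ _ open_UK U1])
        apply (intro holomorphic_intros h1)
       apply (intro holomorphic_intros h2)
      apply (subst higher_deriv_cmult[OF h1 U1 open_UK])
      apply (subst higher_deriv_cmult[OF h2 U1 open_UK])
      by simp
  qed
  finally have md: "mod_stieltjes l q = (-1) ^ l * ((1/2) * (deriv ^^ l) (\<lambda>z. Dq q 0 z 0) 1 + (1/2) * (deriv ^^ l) (Ftail q 1) 1)"
    unfolding mod_stieltjes_def by simp
  have A: "(deriv ^^ l) (\<lambda>z. Dq q 0 z 0) 1 = (-1) ^ l * complex_of_real (h 0)"
  proof -
    have "(\<lambda>z. Dq q 0 z 0) = (\<lambda>z. 1 * exp ((- complex_of_real (ln q)) * z) + 0 * exp (0 * z))"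
      using q by (simp add: powr_exp_real)
    then have "(deriv ^^ l) (\<lambda>z. Dq q 0 z 0) 1 = (deriv ^^ l) (\<lambda>z. 1 * exp ((- complex_of_real (ln q)) * z) + 0 * exp (0 * z)) 1"
      by (simp only:)
    also have "\<dots> = 1 * (- complex_of_real (ln q)) ^ l * exp ((- complex_of_real (ln q)) * 1) + 0 * 0 ^ l * exp (0 * 1)"
      by (simp only: hd_exp2)
    also have "\<dots> = (- complex_of_real (ln q)) ^ l * exp ((- complex_of_real (ln q)) * 1)"
      by simp
    also have "\<dots> = (-1) ^ l * complex_of_real (h 0)"
      using q by (simp add: exp_at1' h_def power_minus[of "complex_of_real (ln q)"] divide_inverse)
    finally show ?thesis .
  qed
  define T where "T = (deriv ^^ l) (Ftail q 1) 1"
  have B: "(deriv ^^ l) (\<lambda>z. (-1) ^ n * Dq q 1 z (real n)) 1 = (-1) ^ l * complex_of_real (u n)" for n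
  proof -
    have p1: "real n + q > 0" "real n + 1 + q > 0" using q by auto
    define L1 where "L1 = complex_of_real (ln (real n + q))"
    define L2 where "L2 = complex_of_real (ln (real n + 1 + q))"
    have e1: "complex_of_real (real n + q) powr (-z) = exp ((- L1) * z)" for z
      unfolding L1_def by (rule powr_exp_real[OF p1(1)])
    have e2: "complex_of_real (real n + 1 + q) powr (-z) = exp ((- L2) * z)" for z
      unfolding L2_def by (rule powr_exp_real[OF p1(2)])
    have "(\<lambda>z. (-1) ^ n * Dq q 1 z (real n)) =
       (\<lambda>z. (-1) ^ n * exp ((- L1) * z) + (- ((-1) ^ n)) * exp ((- L2) * z))"
      by (simp only: One_nat_def Dq.simps e1 e2) (simp add: fun_eq_iff algebra_simps)
    then have "(deriv ^^ l) (\<lambda>z. (-1) ^ n * Dq q 1 z (real n)) 1 =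
       (-1) ^ n * (- L1) ^ l * exp ((- L1) * 1) + (- ((-1) ^ n)) * (- L2) ^ l * exp ((- L2) * 1)"
      by (simp only: hd_exp2)
    also have "\<dots> = (-1) ^ n * ((- L1) ^ l * exp ((- L1) * 1)) + (- ((-1) ^ n)) * ((- L2) ^ l * exp ((- L2) * 1))"
      by (simp only: mult.assoc)
    also have "(- L1) ^ l * exp ((- L1) * 1) = (-1) ^ l * complex_of_real (h n)"
      unfolding L1_def h_def using exp_at1[OF p1(1)]
      by (simp add: power_minus[of "complex_of_real (ln (real n + q))"] divide_inverse)
    also have "(- L2) ^ l * exp ((- L2) * 1) = (-1) ^ l * complex_of_real (h (Suc n))"
    proof -
      have "real (Suc n) + q = real n + 1 + q" by simp
      then show ?thesis
        unfolding L2_def h_def using exp_at1[OF p1(2)]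
        by (simp only:) (simp add: power_minus[of "complex_of_real (ln (real n + 1 + q))"] divide_inverse)
    qed
    also have "(-1) ^ n * ((-1) ^ l * complex_of_real (h n)) + - ((-1) ^ n) * ((-1) ^ l * complex_of_real (h (Suc n)))
        = (-1) ^ l * complex_of_real (u n)"
      unfolding u_def by (simp add: algebra_simps)
    finally show ?thesis .
  qed
  have sT: "(\<lambda>n. (-1) ^ l * complex_of_real (u n)) sums T"
    using Ftail_higher_deriv[OF q U1, of l] unfolding T_def B .
  then have "(\<lambda>n. (-1) ^ l * ((-1) ^ l * complex_of_real (u n))) sums ((-1) ^ l * T)"
    by (rule sums_mult)
  moreover have m1: "((-1::complex) ^ l * (-1) ^ l) = 1"
    by (simp flip: power_mult_distrib)
  ultimately have sT2: "(\<lambda>n. complex_of_real (u n)) sums ((-1) ^ l * T)"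
    by (simp add: mult.assoc[symmetric])
  have su: "u sums Re ((-1) ^ l * T)" using sums_Re[OF sT2] by simp
  have "(\<lambda>n. complex_of_real (u n)) sums complex_of_real (Re ((-1) ^ l * T))"
    by (rule sums_of_real[OF su])
  then have A2: "(-1) ^ l * T = complex_of_real (Re ((-1) ^ l * T))" by (rule sums_unique2[OF sT2])
  have B2: "Re ((-1) ^ l * T) = (\<Sum>n. u n)" by (rule sums_unique[OF su])
  have eqT: "(-1) ^ l * T = complex_of_real (\<Sum>n. u n)" using A2 unfolding B2 .
  have "mod_stieltjes l q = (1/2) * ((-1) ^ l * (-1) ^ l) * complex_of_real (h 0) + (1/2) * ((-1) ^ l * T)"
    unfolding md A T_def[symmetric] by (simp add: algebra_simps)
  also have "\<dots> = complex_of_real (h 0 / 2 + (\<Sum>n. u n) / 2)"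
    unfolding eqT m1 by simp
  finally have M: "mod_stieltjes l q = complex_of_real (h 0 / 2 + (\<Sum>n. u n) / 2)" .
  have "summable u" using su by (rule sums_summable)
  have uu: "u = (\<lambda>n. (-1) ^ n * (h n - h (Suc n)))" by (simp add: u_def[abs_def])
  show ?thesis using \<open>summable u\<close> M unfolding uu by simp
qed

definition gq :: "real \<Rightarrow> nat \<Rightarrow> real \<Rightarrow> real" where
  "gq q l t = ln (t + q) ^ l / (t + q)"
definition Gq :: "real \<Rightarrow> nat \<Rightarrow> real \<Rightarrow> real" where
  "Gq q l t = (real l * ln (t + q) ^ (l - 1) - ln (t + q) ^ l) / (t + q) ^ 2"
definition Fq :: "real \<Rightarrow> nat \<Rightarrow> real \<Rightarrow> real" where
  "Fq q l t = E0bar (- t) * Gq q l t"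

lemma gq_deriv:
  assumes "t + q > 0"
  shows "(gq q l has_real_derivative Gq q l t) (at t)"
proof -
  have "((\<lambda>t. ln (t + q) ^ l / (t + q)) has_real_derivative
      ((real l * ln (t + q) ^ (l - 1) * (1 / (t + q))) * (t + q) - ln (t + q) ^ l * 1) / ((t + q) * (t + q))) (at t)"
    using assms by (auto intro!: derivative_eq_intros)
  moreover have "((real l * ln (t + q) ^ (l - 1) * (1 / (t + q))) * (t + q) - ln (t + q) ^ l * 1) / ((t + q) * (t + q))
      = Gq q l t"
    using assms by (simp add: Gq_def power2_eq_square)
  ultimately show ?thesis unfolding gq_def[abs_def] by simp
qed

lemma deriv_gq: "t + q > 0 \<Longrightarrow> deriv (gq q l) t = Gq q l t"
  using gq_deriv DERIV_imp_deriv by blast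

lemma Gq_cont: "q > 0 \<Longrightarrow> a \<ge> 0 \<Longrightarrow> continuous_on {a..b} (Gq q l)"
  unfolding Gq_def[abs_def]
  by (intro continuous_intros) (auto simp: power2_eq_square)

lemma Gq_nonpos:
  assumes q: "q > 0" and t: "t \<ge> exp (real l)"
  shows "Gq q l t \<le> 0"
proof -
  have "t + q > exp (real l)" using t q by simp
  then have L: "ln (t + q) \<ge> real l" using q t
    by (metis exp_gt_zero less_eq_real_def ln_exp ln_less_cancel_iff add_pos_pos order.strict_trans2)
  have "real l * ln (t + q) ^ (l - 1) \<le> ln (t + q) ^ l"
  proof (cases l)
    case 0 then show ?thesis by simp
  next
    case (Suc m)
    have "real l * ln (t + q) ^ m \<le> ln (t + q) * ln (t + q) ^ m"
      using L by (intro mult_right_mono) (auto simp: Suc)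
    then show ?thesis using Suc by simp
  qed
  then show ?thesis unfolding Gq_def by (intro divide_nonpos_nonneg) auto
qed

lemma gq_nonneg:
  assumes q: "q > 0" and t: "t \<ge> exp (real l)"
  shows "gq q l t \<ge> 0"
proof -
  have "t + q > 1" using t q
    by (smt (verit) one_le_exp_iff of_nat_0_le_iff)
  then have "ln (t + q) \<ge> 0" by simp
  then show ?thesis unfolding gq_def using q t by (smt (verit) divide_nonneg_pos exp_gt_zero zero_le_power)
qed

lemma E0bar_interval:
  assumes "real n < t" "t \<le> real n + 1"
  shows "E0bar (- t) = (-1) ^ (n + 1)"
proof -
  have "\<lfloor>- t\<rfloor> = - int n - 1"
    using assms by (intro floor_unique) auto
  then show ?thesis unfolding E0bar_def by (auto simp: even_minus)
qed

lemma Fq_int_unit: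
  assumes q: "q > 0"
  shows "(Fq q l has_integral ((-1) ^ n * (gq q l (real n) - gq q l (real n + 1)))) {real n..real n + 1}"
proof -
  have "(Gq q l has_integral (gq q l (real n + 1) - gq q l (real n))) {real n..real n + 1}"
  proof (rule fundamental_theorem_of_calculus)
    fix x assume "x \<in> {real n..real n + 1}"
    then have "x + q > 0" using q by auto
    then show "(gq q l has_vector_derivative Gq q l x) (at x within {real n..real n + 1})"
      using gq_deriv has_real_derivative_iff_has_vector_derivative
      by (metis has_vector_derivative_at_within)
  qed simp
  then have I1: "((\<lambda>t. (-1) ^ (n + 1) * Gq q l t) has_integral (-1) ^ (n + 1) * (gq q l (real n + 1) - gq q l (real n))) {real n..real n + 1}"
    by (rule has_integral_mult_right)
  have "(Fq q l has_integral (-1) ^ (n + 1) * (gq q l (real n + 1) - gq q l (real n))) {real n..real n + 1}"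
  proof (rule has_integral_spike_finite[where S="{real n}", OF _ _ I1])
    fix x assume "x \<in> {real n..real n + 1} - {real n}"
    then show "Fq q l x = (-1) ^ (n + 1) * Gq q l x"
      unfolding Fq_def using E0bar_interval[of n x] by auto
  qed simp
  moreover have "(-1) ^ (n + 1) * (gq q l (real n + 1) - gq q l (real n)) =
     (-1) ^ n * (gq q l (real n) - gq q l (real n + 1))" by (simp add: algebra_simps)
  ultimately show ?thesis by simp
qed

lemma Fq_int_N:
  assumes q: "q > 0"
  shows "(Fq q l has_integral (\<Sum>i<N. (-1) ^ (a + i) * (gq q l (real (a + i)) - gq q l (real (a + i) + 1))))
          {real a..real a + real N}"
proof (induction N)
  case 0
  then show ?case by auto
next
  case (Suc N)
  have "(Fq q l has_integral (-1) ^ (a + N) * (gq q l (real (a + N)) - gq q l (real (a + N) + 1)))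
      {real a + real N..real a + real N + 1}"
    using Fq_int_unit[OF q, of l "a + N"] by simp
  from has_integral_combine[OF _ _ Suc.IH this]
  show ?case by (simp add: add_ac)
qed

lemma absG_int_Icc: "q > 0 \<Longrightarrow> a \<ge> 0 \<Longrightarrow> (\<lambda>t. \<bar>Gq q l t\<bar>) integrable_on {a..b}"
  by (intro integrable_continuous_real continuous_on_rabs Gq_cont)

lemma absG_bound:
  fixes q a y :: real and l :: nat
  assumes q: "q > 0" and a: "a \<ge> 0" and y: "y \<ge> a"
  defines "T \<equiv> max a (exp (real l))"
  shows "integral {a..y} (\<lambda>t. \<bar>Gq q l t\<bar>) \<le> integral {a..T} (\<lambda>t. \<bar>Gq q l t\<bar>) + gq q l T"
proof -
  have aT: "a \<le> T" "exp (real l) \<le> T" by (auto simp: T_def)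
  have gT: "gq q l T \<ge> 0" using gq_nonneg[OF q aT(2)] .
  show ?thesis
  proof (cases "y \<le> T")
    case True
    have "integral {a..y} (\<lambda>t. \<bar>Gq q l t\<bar>) \<le> integral {a..T} (\<lambda>t. \<bar>Gq q l t\<bar>)"
      using True by (intro integral_subset_le absG_int_Icc q a) auto
    then show ?thesis using gT by simp
  next
    case False
    have "integral {a..y} (\<lambda>t. \<bar>Gq q l t\<bar>) = integral {a..T} (\<lambda>t. \<bar>Gq q l t\<bar>) + integral {T..y} (\<lambda>t. \<bar>Gq q l t\<bar>)"
      using Henstock_Kurzweil_Integration.integral_combine[where a=a and c=T and b=y and f="\<lambda>t. \<bar>Gq q l t\<bar>"] False aT absG_int_Icc[OF q a, where b=y and l=l] by simp
    also have "integral {T..y} (\<lambda>t. \<bar>Gq q l t\<bar>) = integral {T..y} (\<lambda>t. - Gq q l t)"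
      using Gq_nonpos[OF q] aT by (intro integral_cong) fastforce
    also have "\<dots> = - (gq q l y - gq q l T)"
    proof (rule integral_unique, rule has_integral_neg, rule fundamental_theorem_of_calculus)
      show "T \<le> y" using False by simp
      fix x assume "x \<in> {T..y}"
      then have "x + q > 0" using q a aT by auto
      then show "(gq q l has_vector_derivative Gq q l x) (at x within {T..y})"
        using gq_deriv has_real_derivative_iff_has_vector_derivative
        by (metis has_vector_derivative_at_within)
    qed
    also have "gq q l y \<ge> 0" using gq_nonneg[OF q] False aT by simp
    ultimately show ?thesis by simp
  qed
qed

lemma absG_integrable:
  assumes q: "q > 0" and a: "a \<ge> 0"
  shows "(\<lambda>t. \<bar>Gq q l t\<bar>) integrable_on {a..}"
proof -
  define B where "B = integral {a..max a (exp (real l))} (\<lambda>t. \<bar>Gq q l t\<bar>) + gq q l (max a (exp (real l)))"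
  define f where "f k t = (if t \<in> {a..a + real k} then \<bar>Gq q l t\<bar> else 0)" for k t
  have hf: "(f k has_integral integral {a..a + real k} (\<lambda>t. \<bar>Gq q l t\<bar>)) {a..}" for k
    unfolding f_def
    by (rule has_integral_restrict[of "{a..a + real k}" "{a..}", THEN iffD2])
       (auto intro: integrable_integral absG_int_Icc[OF q a])
  have "(\<lambda>t. \<bar>Gq q l t\<bar>) integrable_on {a..} \<and>
      (\<lambda>k. integral {a..} (f k)) \<longlonglongrightarrow> integral {a..} (\<lambda>t. \<bar>Gq q l t\<bar>)"
  proof (rule monotone_convergence_increasing)
    show "f k integrable_on {a..}" for k using hf by blast
    show "f k x \<le> f (Suc k) x" if "x \<in> {a..}" for k x
      using that by (auto simp: f_def)
    show "(\<lambda>k. f k x) \<longlonglongrightarrow> \<bar>Gq q l x\<bar>" if "x \<in> {a..}" for x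
    proof (rule tendsto_eventually)
      have "eventually (\<lambda>k. real k \<ge> x - a) sequentially"
        by (meson eventually_sequentiallyI nat_ceiling_le_eq)
      then show "eventually (\<lambda>k. f k x = \<bar>Gq q l x\<bar>) sequentially"
        by eventually_elim (use that in \<open>auto simp: f_def\<close>)
    qed
    have "norm (integral {a..} (f k)) \<le> B" for k
    proof -
      have "integral {a..} (f k) = integral {a..a + real k} (\<lambda>t. \<bar>Gq q l t\<bar>)"
        using hf by (rule integral_unique)
      moreover have "integral {a..a + real k} (\<lambda>t. \<bar>Gq q l t\<bar>) \<ge> 0"
        by (intro integral_nonneg absG_int_Icc q a) auto
      moreover have "integral {a..a + real k} (\<lambda>t. \<bar>Gq q l t\<bar>) \<le> B"
        unfolding B_def by (rule absG_bound[OF q a]) simp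
      ultimately show ?thesis by simp
    qed
    then show "bounded (range (\<lambda>k. integral {a..} (f k)))"
      by (intro boundedI[of _ B]) auto
  qed
  then show ?thesis by blast
qed

lemma Fq_integral:
  fixes a l :: nat and q :: real
  assumes q: "q > 0"
  defines "u \<equiv> (\<lambda>n. (-1) ^ n * (gq q l (real n) - gq q l (real n + 1)))"
  assumes su: "summable u"
  shows "Fq q l integrable_on {real a..} \<and> integral {real a..} (Fq q l) = (\<Sum>i. u (i + a))"
proof -
  define f where "f k t = (if t \<in> {real a..real a + real k} then Fq q l t else 0)" for k t
  have hf: "(f k has_integral (\<Sum>i<k. u (a + i))) {real a..}" for k
    unfolding f_def u_def
    by (rule has_integral_restrict[of "{real a..real a + real k}" "{real a..}", THEN iffD2])
       (use Fq_int_N[OF q, of l a k] in auto)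
  have p1: "f k integrable_on {real a..}" for k using hf by blast
  have p2: "(\<lambda>t. \<bar>Gq q l t\<bar>) integrable_on {real a..}" by (rule absG_integrable[OF q]) simp
  have p3: "norm (f k x) \<le> \<bar>Gq q l x\<bar>" if "x \<in> {real a..}" for k x
    by (auto simp: f_def Fq_def E0bar_def abs_mult)
  have p4: "(\<lambda>k. f k x) \<longlonglongrightarrow> Fq q l x" if "x \<in> {real a..}" for x
  proof (rule tendsto_eventually)
    have "eventually (\<lambda>k. real k \<ge> x - real a) sequentially"
      by (meson eventually_sequentiallyI nat_ceiling_le_eq)
    then show "eventually (\<lambda>k. f k x = Fq q l x) sequentially"
      by eventually_elim (use that in \<open>auto simp: f_def\<close>)
  qed
  note dc = dominated_convergence[OF p1 p2 p3 p4]
  have "summable (\<lambda>i. u (i + a))" using su by (rule summable_ignore_initial_segment)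
  then have "(\<lambda>k. \<Sum>i<k. u (i + a)) \<longlonglongrightarrow> (\<Sum>i. u (i + a))" by (rule summable_LIMSEQ)
  moreover have "integral {real a..} (f k) = (\<Sum>i<k. u (i + a))" for k
    using integral_unique[OF hf[of k]] by (simp add: add.commute)
  ultimately have "(\<lambda>k. integral {real a..} (f k)) \<longlonglongrightarrow> (\<Sum>i. u (i + a))" by simp
  with dc show ?thesis using LIMSEQ_unique by blast
qed

lemma alt_partial:
  fixes h :: "nat \<Rightarrow> real"
  shows "h 0 / 2 + (\<Sum>n<a. (-1) ^ n * (h n - h (Suc n))) / 2 = (\<Sum>n=0..a. (-1) ^ n * h n) - (-1) ^ a * h a / 2"
proof (induction a)
  case (Suc a)
  define s :: real where "s = (-1) ^ a"
  have "h 0 / 2 + (\<Sum>n<Suc a. (-1) ^ n * (h n - h (Suc n))) / 2 =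
      (h 0 / 2 + (\<Sum>n<a. (-1) ^ n * (h n - h (Suc n))) / 2) + s * (h a - h (Suc a)) / 2"
    by (simp add: s_def field_simps)
  also have "\<dots> = (\<Sum>n=0..a. (-1) ^ n * h n) - s * h a / 2 + s * (h a - h (Suc a)) / 2"
    using Suc.IH by (simp add: s_def)
  also have "\<dots> = (\<Sum>n=0..Suc a. (-1) ^ n * h n) - (-1) ^ Suc a * h (Suc a) / 2"
    by (simp add: s_def sum.atLeast0_atMost_Suc field_simps)
  finally show ?case .
qed simp

theorem theorem3p6:
  shows "(\<forall>(q::real) (l::nat) (\<alpha>::nat). q > 0 \<longrightarrow>
      (let g = (\<lambda>t::real. ln (t + q) ^ l / (t + q)) in
        (\<lambda>t. E0bar (- t) * deriv g t) integrable_on {real \<alpha>..} \<and>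
        mod_stieltjes l q =
          complex_of_real
           ((\<Sum>n=0..\<alpha>. (-1) ^ n * (ln (real n + q) ^ l / (real n + q)))
            - (-1) ^ \<alpha> * (ln (real \<alpha> + q) ^ l / (2 * (real \<alpha> + q)))
            + 1/2 * integral {real \<alpha>..} (\<lambda>t. E0bar (- t) * deriv g t))))
   \<and> (\<forall>(q::nat) (l::nat). q \<ge> 1 \<longrightarrow>
      (let d = (\<lambda>j::nat. (-1) ^ (j + 1) *
                 (ln (real j + 1) ^ l / (real j + 1) - ln (real j) ^ l / real j)) in
        summable (\<lambda>i. d (i + q)) \<and>
        mod_stieltjes l (real q) =
          complex_of_real
           (ln (real q) ^ l / (2 * real q) + (-1) ^ q / 2 * (\<Sum>i. d (i + q)))))"
proof (intro conjI allI impI)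
  fix q :: real and l \<alpha> :: nat
  assume q: "q > 0"
  define h where "h n = ln (real n + q) ^ l / (real n + q)" for n
  define u where "u n = (-1) ^ n * (gq q l (real n) - gq q l (real n + 1))" for n
  have hu: "(\<lambda>n. (-1) ^ n * (h n - h (Suc n))) = u"
    by (auto simp: fun_eq_iff h_def u_def gq_def add_ac)
  from key[OF q, of l] have K: "summable u" "mod_stieltjes l q = complex_of_real (h 0 / 2 + (\<Sum>n. u n) / 2)"
    unfolding h_def[symmetric] hu by auto
  have FI: "Fq q l integrable_on {real \<alpha>..}" "integral {real \<alpha>..} (Fq q l) = (\<Sum>i. u (i + \<alpha>))"
    using Fq_integral[OF q, of l, folded u_def, OF K(1)] by auto
  have gg: "(\<lambda>t::real. ln (t + q) ^ l / (t + q)) = gq q l" by (auto simp: fun_eq_iff gq_def)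
  have eqF: "E0bar (- t) * deriv (gq q l) t = Fq q l t" if "t \<in> {real \<alpha>..}" for t
  proof -
    have "t + q > 0" using that q by auto
    then show ?thesis by (simp add: deriv_gq Fq_def)
  qed
  have I1: "(\<lambda>t. E0bar (- t) * deriv (gq q l) t) integrable_on {real \<alpha>..}"
    by (subst integrable_cong[where A="{real \<alpha>..}" and g="Fq q l"]) (use eqF FI(1) in auto)
  have I2: "integral {real \<alpha>..} (\<lambda>t. E0bar (- t) * deriv (gq q l) t) = (\<Sum>i. u (i + \<alpha>))"
    by (subst integral_cong[where s="{real \<alpha>..}" and g="Fq q l"]) (use eqF FI(2) in auto)
  have S: "(\<Sum>n. u n) = (\<Sum>i. u (i + \<alpha>)) + (\<Sum>i<\<alpha>. u i)"
    by (rule suminf_split_initial_segment[OF K(1)])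
  have AP: "h 0 / 2 + (\<Sum>n<\<alpha>. u n) / 2 = (\<Sum>n=0..\<alpha>. (-1) ^ n * h n) - (-1) ^ \<alpha> * h \<alpha> / 2"
    using alt_partial[of h \<alpha>] unfolding hu .
  have "h 0 / 2 + (\<Sum>n. u n) / 2 =
     (\<Sum>n=0..\<alpha>. (-1) ^ n * h n) - (-1) ^ \<alpha> * h \<alpha> / 2 + 1/2 * (\<Sum>i. u (i + \<alpha>))"
    using AP unfolding S by (simp add: field_simps)
  also have "(\<Sum>n=0..\<alpha>. (-1) ^ n * h n) = (\<Sum>n=0..\<alpha>. (-1) ^ n * (ln (real n + q) ^ l / (real n + q)))"
    by (simp add: h_def)
  also have "(-1) ^ \<alpha> * h \<alpha> / 2 = (-1) ^ \<alpha> * (ln (real \<alpha> + q) ^ l / (2 * (real \<alpha> + q)))"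
    by (simp add: h_def)
  finally have M: "mod_stieltjes l q = complex_of_real ((\<Sum>n=0..\<alpha>. (-1) ^ n * (ln (real n + q) ^ l / (real n + q)))
            - (-1) ^ \<alpha> * (ln (real \<alpha> + q) ^ l / (2 * (real \<alpha> + q)))
            + 1/2 * integral {real \<alpha>..} (\<lambda>t. E0bar (- t) * deriv (gq q l) t))"
    unfolding K(2) I2 by simp
  show "let g = (\<lambda>t::real. ln (t + q) ^ l / (t + q)) in
        (\<lambda>t. E0bar (- t) * deriv g t) integrable_on {real \<alpha>..} \<and>
        mod_stieltjes l q =
          complex_of_real
           ((\<Sum>n=0..\<alpha>. (-1) ^ n * (ln (real n + q) ^ l / (real n + q)))
            - (-1) ^ \<alpha> * (ln (real \<alpha> + q) ^ l / (2 * (real \<alpha> + q)))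
            + 1/2 * integral {real \<alpha>..} (\<lambda>t. E0bar (- t) * deriv g t))"
    unfolding Let_def gg using I1 M by blast
next
  fix q l :: nat
  assume q1: "q \<ge> 1"
  have q: "real q > 0" using q1 by simp
  define h where "h n = ln (real n + real q) ^ l / (real n + real q)" for n
  define u where "u n = (-1) ^ n * (h n - h (Suc n))" for n
  from key[OF q, of l] have K: "summable u" "mod_stieltjes l (real q) = complex_of_real (h 0 / 2 + (\<Sum>n. u n) / 2)"
    unfolding h_def[symmetric] u_def[symmetric] by auto
  define d where "d j = (-1) ^ (j + 1) * (ln (real j + 1) ^ l / (real j + 1) - ln (real j) ^ l / real j)" for j
  have du: "d (i + q) = (-1) ^ q * u i" for i
    by (simp add: d_def u_def h_def power_add algebra_simps)
  have sd: "summable (\<lambda>i. d (i + q))"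
    unfolding du by (rule summable_mult[OF K(1)])
  have "(\<Sum>i. d (i + q)) = (-1) ^ q * (\<Sum>i. u i)"
    unfolding du by (rule suminf_mult[OF K(1)])
  then have "ln (real q) ^ l / (2 * real q) + (-1) ^ q / 2 * (\<Sum>i. d (i + q)) = h 0 / 2 + (\<Sum>n. u n) / 2"
    by (simp add: h_def flip: power_add)
  then show "let d = (\<lambda>j::nat. (-1) ^ (j + 1) *
                 (ln (real j + 1) ^ l / (real j + 1) - ln (real j) ^ l / real j)) in
        summable (\<lambda>i. d (i + q)) \<and>
        mod_stieltjes l (real q) =
          complex_of_real
           (ln (real q) ^ l / (2 * real q) + (-1) ^ q / 2 * (\<Sum>i. d (i + q)))"
    unfolding Let_def d_def[symmetric] using sd K(2) by simp
qed

end
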